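(* Let $k$ be a real division algebra (one of $\mathbb{R},\mathbb{C},\mathbb{H},\mathbb{O}$) and let $\mathcal Z\subset k$ be a discrete subring closed under conjugation. Let $(a_n)_{n\ge1}$ be a sequence in $\mathcal Z$ and $x_0\in k$, and set $x_n=T_{a_n}\cdots T_{a_1}x_0$. Suppose that all $x_n$ are defined and $\|x_n\|<1$ for all $n\geq 0$. Then the associated continued fraction converges to $x_0$: \[x_0=\lim_{n\to\infty} T^{-1}_{a_1}\cdots T^{-1}_{a_n}0=\lim_{n\to\infty} \cfrac{1}{a_1+\cfrac{1}{\ddots+\cfrac{1}{a_n}}}.\]
   Context: $k$ is identified with $\mathbb{R}^d$ ($d=1,2,4,8$) with basis $1=e_0,e_1,\dots,e_{d-1}$ and its standard multiplication; for $x=a_0+\sum_{i\ge1}a_ie_i$, $\Re(x)=a_0$, $\overline{x}=\Re(x)-(x-\Re(x))$, $\|x\|^2=x\overline{x}$ (Euclidean norm), and convergence is with respect to the Euclidean distance. For $p,q\in k$, $p/q=pq^{-1}$. A subring is discrete if it is a discrete subset of $\mathbb{R}^d$. For a digit $a\in\mathcal Z$, $T_a x=x^{-1}-a$ and $T_a^{-1}x=(x+a)^{-1}$. The case $n=0$ means $x_0$ itself. *)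

theory Defs
  imports Complex_Main "HOL-Library.Function_Algebras"
begin

text \<open>
  The real division algebra k = R^d, d = 2^m with m \<le> 3 (R, C, H, O), is modelled
  on functions nat \<Rightarrow> real whose coordinates i \<ge> d vanish; coordinate i is the
  coefficient of the basis vector e_i (e_0 = 1).  The multiplication is the
  Cayley--Dickson doubling (a,b)(c,e) = (ac - e* b, e a + b c*), which gives the
  standard multiplication of R, C, H, O with respect to an orthonormal basis.
\<close>

definition kset :: "nat \<Rightarrow> (nat \<Rightarrow> real) set" where
  "kset m = {x. \<forall>i\<ge>2^m. x i = 0}"

definition kone :: "nat \<Rightarrow> real" where
  "kone = (\<lambda>i. if i = 0 then 1 else 0)"

definition lo_part :: "nat \<Rightarrow> (nat \<Rightarrow> real) \<Rightarrow> (nat \<Rightarrow> real)" where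
  "lo_part m x = (\<lambda>i. if i < 2^m then x i else 0)"

definition hi_part :: "nat \<Rightarrow> (nat \<Rightarrow> real) \<Rightarrow> (nat \<Rightarrow> real)" where
  "hi_part m x = (\<lambda>i. if i < 2^m then x (i + 2^m) else 0)"

definition join_parts :: "nat \<Rightarrow> (nat \<Rightarrow> real) \<Rightarrow> (nat \<Rightarrow> real) \<Rightarrow> (nat \<Rightarrow> real)" where
  "join_parts m p q = (\<lambda>i. if i < 2^m then p i else if i < 2 * 2^m then q (i - 2^m) else 0)"

definition kconj :: "nat \<Rightarrow> (nat \<Rightarrow> real) \<Rightarrow> (nat \<Rightarrow> real)" where
  "kconj m x = (\<lambda>i. if i = 0 then x 0 else if i < 2^m then - x i else 0)"

fun kmult :: "nat \<Rightarrow> (nat \<Rightarrow> real) \<Rightarrow> (nat \<Rightarrow> real) \<Rightarrow> (nat \<Rightarrow> real)" where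
  "kmult 0 x y = (\<lambda>i. if i = 0 then x 0 * y 0 else 0)"
| "kmult (Suc m) x y =
     join_parts m
       (kmult m (lo_part m x) (lo_part m y) - kmult m (kconj m (hi_part m y)) (hi_part m x))
       (kmult m (hi_part m y) (lo_part m x) + kmult m (hi_part m x) (kconj m (lo_part m y)))"

definition knorm :: "nat \<Rightarrow> (nat \<Rightarrow> real) \<Rightarrow> real" where
  "knorm m x = sqrt (\<Sum>i<2^m. (x i)\<^sup>2)"

definition kinv :: "nat \<Rightarrow> (nat \<Rightarrow> real) \<Rightarrow> (nat \<Rightarrow> real)" where
  "kinv m x = (\<lambda>i. kconj m x i / (knorm m x)\<^sup>2)"

definition is_subring :: "nat \<Rightarrow> (nat \<Rightarrow> real) set \<Rightarrow> bool" where
  "is_subring m Z \<longleftrightarrow> Z \<subseteq> kset m \<and> 0 \<in> Z \<and> kone \<in> Z \<and>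
     (\<forall>x\<in>Z. \<forall>y\<in>Z. x + y \<in> Z \<and> x - y \<in> Z \<and> kmult m x y \<in> Z)"

definition is_discrete :: "nat \<Rightarrow> (nat \<Rightarrow> real) set \<Rightarrow> bool" where
  "is_discrete m Z \<longleftrightarrow> (\<forall>z\<in>Z. \<exists>e>0. \<forall>w\<in>Z. w \<noteq> z \<longrightarrow> e \<le> knorm m (w - z))"

definition Tmap :: "nat \<Rightarrow> (nat \<Rightarrow> real) \<Rightarrow> (nat \<Rightarrow> real) \<Rightarrow> (nat \<Rightarrow> real)" where
  "Tmap m a x = kinv m x - a"

definition Tinv :: "nat \<Rightarrow> (nat \<Rightarrow> real) \<Rightarrow> (nat \<Rightarrow> real) \<Rightarrow> (nat \<Rightarrow> real)" where
  "Tinv m a x = kinv m (x + a)"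

fun orbit :: "nat \<Rightarrow> (nat \<Rightarrow> nat \<Rightarrow> real) \<Rightarrow> (nat \<Rightarrow> real) \<Rightarrow> nat \<Rightarrow> (nat \<Rightarrow> real)" where
  "orbit m a x0 0 = x0"
| "orbit m a x0 (Suc n) = Tmap m (a (Suc n)) (orbit m a x0 n)"

fun tinv_comp :: "nat \<Rightarrow> (nat \<Rightarrow> nat \<Rightarrow> real) \<Rightarrow> nat \<Rightarrow> (nat \<Rightarrow> real) \<Rightarrow> (nat \<Rightarrow> real)" where
  "tinv_comp m a 0 y = y"
| "tinv_comp m a (Suc n) y = tinv_comp m a n (Tinv m (a (Suc n)) y)"

end

theory Submission
  imports Defs
begin


definition nsq :: "nat \<Rightarrow> (nat \<Rightarrow> real) \<Rightarrow> real" where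
  "nsq m x = (\<Sum>i<2^m. (x i)\<^sup>2)"
definition kin :: "nat \<Rightarrow> (nat \<Rightarrow> real) \<Rightarrow> (nat \<Rightarrow> real) \<Rightarrow> real" where
  "kin m x y = (\<Sum>i<2^m. x i * y i)"
definition sc :: "real \<Rightarrow> nat \<Rightarrow> real" where
  "sc r = (\<lambda>i. if i = 0 then r else 0)"

lemma sum_split_add: "(\<Sum>i<a+b. f i) = (\<Sum>i<a. f i) + (\<Sum>i<b. f (i+a))" for f :: "nat \<Rightarrow> real"
  by (induction b) (auto simp: add.commute)

lemma nsq_nonneg: "0 \<le> nsq m x"
  unfolding nsq_def by (simp add: sum_nonneg)

lemma knorm_sq: "(knorm m x)\<^sup>2 = nsq m x"
  unfolding knorm_def nsq_def[symmetric] using nsq_nonneg by simp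

lemma knorm_nsq: "knorm m x = sqrt (nsq m x)"
  unfolding knorm_def nsq_def by simp

lemma kone_sc: "kone = sc 1" unfolding kone_def sc_def by simp

lemma lo_neg: "lo_part m (- p) = - lo_part m p" by (auto simp: lo_part_def)
lemma hi_neg: "hi_part m (- p) = - hi_part m p" by (auto simp: hi_part_def)
lemma conj_neg: "kconj m (- p) = - kconj m p" by (auto simp: kconj_def)
lemma join_neg: "join_parts m (- p) (- q) = - join_parts m p q" by (auto simp: join_parts_def)

lemma kmult_neg: "kmult m (- p) q = - kmult m p q \<and> kmult m p (- q) = - kmult m p q"
proof (induction m arbitrary: p q)
  case 0
  then show ?case by auto
next
  case (Suc m)
  have "kmult (Suc m) (- p) q = - kmult (Suc m) p q"
    apply (simp only: kmult.simps lo_neg hi_neg conj_neg Suc.IH join_neg[symmetric])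
    apply (rule arg_cong2[where f="join_parts m"])
    by (simp_all add: fun_eq_iff)
  moreover have "kmult (Suc m) p (- q) = - kmult (Suc m) p q"
    apply (simp only: kmult.simps lo_neg hi_neg conj_neg Suc.IH join_neg[symmetric])
    apply (rule arg_cong2[where f="join_parts m"])
    by (simp_all add: fun_eq_iff)
  ultimately show ?case by blast
qed

lemma kmult_zero1: "kmult m 0 q = 0"
proof -
  have "kmult m (- 0) q = - kmult m 0 q" using kmult_neg by blast
  then have "kmult m 0 q = - kmult m 0 q" by simp
  then have "\<forall>i. kmult m 0 q i = - kmult m 0 q i" by (simp add: fun_eq_iff)
  then show ?thesis by (simp add: fun_eq_iff)
qed

lemma kmult_zero2: "kmult m q 0 = 0"
proof -
  have "kmult m q (- 0) = - kmult m q 0" using kmult_neg by blast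
  then have "kmult m q 0 = - kmult m q 0" by simp
  then have "\<forall>i. kmult m q 0 i = - kmult m q 0 i" by (simp add: fun_eq_iff)
  then show ?thesis by (simp add: fun_eq_iff)
qed

lemma kconj_zero: "kconj m 0 = 0" by (auto simp: kconj_def)
lemma lo_sc: "lo_part m (sc r) = sc r" by (auto simp: lo_part_def sc_def)
lemma hi_sc: "hi_part m (sc r) = 0" by (auto simp: hi_part_def sc_def)
lemma join_sc: "join_parts m (sc r) 0 = sc r" by (auto simp: join_parts_def sc_def)
lemma kconj_sc: "kconj m (sc r) = sc r" by (auto simp: kconj_def sc_def)
lemma sc_add: "sc r + sc s = sc (r + s)" by (auto simp: sc_def)
lemma sc_diff: "sc r - sc s = sc (r - s)" by (auto simp: sc_def)

lemma kmult_sc: "kmult m (sc r) (sc s) = sc (r * s)"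
proof (induction m arbitrary: r s)
  case 0
  then show ?case by (auto simp: sc_def)
next
  case (Suc m)
  then show ?case by (simp add: lo_sc hi_sc kconj_zero kmult_zero1 kmult_zero2 join_sc)
qed

lemma lo_kset: "lo_part m x \<in> kset m" by (auto simp: lo_part_def kset_def)
lemma hi_kset: "hi_part m x \<in> kset m" by (auto simp: hi_part_def kset_def)
lemma conj_kset: "kconj m x \<in> kset m" by (auto simp: kconj_def kset_def)

lemma conj_conj: "x \<in> kset m \<Longrightarrow> kconj m (kconj m x) = x"
  by (auto simp: kconj_def kset_def)

lemma lo_conj: "lo_part m (kconj (Suc m) x) = kconj m (lo_part m x)"
  by (auto simp: lo_part_def kconj_def)
lemma hi_conj: "hi_part m (kconj (Suc m) x) = - hi_part m x"
  by (auto simp: hi_part_def kconj_def)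

lemma nsq_Suc: "nsq (Suc m) x = nsq m (lo_part m x) + nsq m (hi_part m x)"
proof -
  have "nsq (Suc m) x = (\<Sum>i<2^m + 2^m. (x i)\<^sup>2)" by (simp add: nsq_def mult_2)
  also have "\<dots> = (\<Sum>i<2^m. (x i)\<^sup>2) + (\<Sum>i<2^m. (x (i + 2^m))\<^sup>2)" by (rule sum_split_add)
  also have "(\<Sum>i<2^m. (x i)\<^sup>2) = nsq m (lo_part m x)"
    unfolding nsq_def lo_part_def by (rule sum.cong) auto
  also have "(\<Sum>i<2^m. (x (i + 2^m))\<^sup>2) = nsq m (hi_part m x)"
    unfolding nsq_def hi_part_def by (rule sum.cong) auto
  finally show ?thesis .
qed

lemma norm_ident: "kmult m x (kconj m x) = sc (nsq m x) \<and> kmult m (kconj m x) x = sc (nsq m x)"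
proof (induction m arbitrary: x)
  case 0
  then show ?case by (auto simp: kconj_def sc_def nsq_def power2_eq_square)
next
  case (Suc m)
  let ?a = "lo_part m x" and ?b = "hi_part m x"
  have ca: "kconj m (kconj m ?a) = ?a" using conj_conj lo_kset by blast
  have "kmult (Suc m) x (kconj (Suc m) x) = join_parts m (sc (nsq m ?a) + sc (nsq m ?b)) 0"
    by (simp add: lo_conj hi_conj conj_neg kmult_neg ca Suc.IH)
  moreover have "kmult (Suc m) (kconj (Suc m) x) x = join_parts m (sc (nsq m ?a) + sc (nsq m ?b)) 0"
    by (simp add: lo_conj hi_conj conj_neg kmult_neg ca Suc.IH)
  ultimately show ?case by (simp add: sc_add join_sc nsq_Suc)
qed



lemma nsq_lin: "nsq m (\<lambda>i. p * x i + q * y i) = p\<^sup>2 * nsq m x + 2 * p * q * kin m x y + q\<^sup>2 * nsq m y"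
  unfolding nsq_def kin_def
  by (simp add: power2_eq_square sum.distrib sum_distrib_left algebra_simps)

lemma nsq_add: "nsq m (x + y) = nsq m x + 2 * kin m x y + nsq m y"
  using nsq_lin[of m 1 x 1 y] by (simp add: plus_fun_def)

lemma nsq_diff: "nsq m (x - y) = nsq m x - 2 * kin m x y + nsq m y"
  using nsq_lin[of m 1 x "-1" y] by (simp add: fun_diff_def)

lemma nsq_scale: "nsq m (\<lambda>i. c * x i) = c\<^sup>2 * nsq m x"
  unfolding nsq_def by (simp add: power_mult_distrib sum_distrib_left)

lemma kin_comm: "kin m x y = kin m y x"
  unfolding kin_def by (simp add: mult.commute)

lemma nsq_conj: "nsq m (kconj m x) = nsq m x"
  unfolding nsq_def kconj_def by (rule sum.cong) auto

lemma conj_scale: "kconj m (\<lambda>i. c * x i) = (\<lambda>i. c * kconj m x i)"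
  by (auto simp: kconj_def)

lemma conj_add: "kconj m (x + y) = kconj m x + kconj m y"
  by (auto simp: kconj_def)

lemma conj_diff: "kconj m (x - y) = kconj m x - kconj m y"
  by (auto simp: kconj_def)

lemma nsq_zero_iff: "x \<in> kset m \<Longrightarrow> nsq m x = 0 \<longleftrightarrow> x = 0"
proof
  assume x: "x \<in> kset m" and h: "nsq m x = 0"
  have "\<forall>i\<in>{..<2^m}. (x i)\<^sup>2 = 0"
    using h unfolding nsq_def by (subst sum_nonneg_eq_0_iff[symmetric]) auto
  show "x = 0"
  proof (rule ext)
    fix i show "x i = 0 i"
      using \<open>\<forall>i\<in>{..<2^m}. (x i)\<^sup>2 = 0\<close> x by (cases "i < 2^m") (auto simp: kset_def)
  qed
qed (simp add: nsq_def)

lemma kinv_eq: "kinv m x = (\<lambda>i. kconj m x i / nsq m x)"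
  unfolding kinv_def knorm_sq ..

lemma kinv_kset: "kinv m x \<in> kset m"
  by (auto simp: kinv_def kconj_def kset_def)

lemma nsq_kinv: "nsq m (kinv m x) = 1 / nsq m x"
proof -
  have e: "kinv m x = (\<lambda>i. (1 / nsq m x) * kconj m x i)" by (auto simp: kinv_eq)
  have "nsq m (kinv m x) = nsq m (\<lambda>i. (1 / nsq m x) * kconj m x i)" by (simp only: e)
  also have "\<dots> = (1 / nsq m x)\<^sup>2 * nsq m x" by (simp only: nsq_scale nsq_conj)
  finally have "nsq m (kinv m x) = (1 / nsq m x)\<^sup>2 * nsq m x" .
  then show ?thesis by (simp add: power2_eq_square)
qed

lemma kinv_kinv: assumes "x \<in> kset m" "x \<noteq> 0" shows "kinv m (kinv m x) = x"
proof -
  have pos: "nsq m x \<noteq> 0" using assms nsq_zero_iff by blast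
  have e: "kinv m x = (\<lambda>i. (1 / nsq m x) * kconj m x i)" by (auto simp: kinv_eq)
  have "kconj m (kinv m x) = kconj m (\<lambda>i. (1 / nsq m x) * kconj m x i)" by (simp only: e)
  also have "\<dots> = (\<lambda>i. (1 / nsq m x) * x i)"
    by (simp only: conj_scale conj_conj assms)
  finally have c: "kconj m (kinv m x) = (\<lambda>i. (1 / nsq m x) * x i)" .
  have n: "nsq m (kinv m x) = 1 / nsq m x" by (rule nsq_kinv)
  show ?thesis
  proof (rule ext)
    fix i
    have "kinv m (kinv m x) i = kconj m (kinv m x) i / nsq m (kinv m x)"
      unfolding kinv_eq[of m "kinv m x"] ..
    also have "\<dots> = x i" unfolding c n using pos by simp
    finally show "kinv m (kinv m x) i = x i" .
  qed
qed

lemma nsq_kinv_diff: assumes "nsq m x \<noteq> 0" "nsq m y \<noteq> 0"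
  shows "nsq m (kinv m x - kinv m y) = nsq m (x - y) / (nsq m x * nsq m y)"
proof -
  let ?X = "nsq m x" and ?Y = "nsq m y"
  have "kinv m x - kinv m y = kconj m (\<lambda>i. (1/?X) * x i + (- 1/?Y) * y i)"
    by (auto simp: kinv_eq kconj_def)
  then have "nsq m (kinv m x - kinv m y) = (1/?X)\<^sup>2 * ?X + 2 * (1/?X) * (-1/?Y) * kin m x y + (-1/?Y)\<^sup>2 * ?Y"
    by (simp only: nsq_conj nsq_lin nsq_def[symmetric])
  also have "\<dots> = (?Y - 2 * kin m x y + ?X) / (?X * ?Y)"
    using assms by (simp add: field_simps power2_eq_square)
  also have "\<dots> = nsq m (x - y) / (?X * ?Y)" by (simp add: nsq_diff)
  finally show ?thesis .
qed

lemma nsq_sym: "nsq m (x - y) = nsq m (y - x)"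
  by (simp add: nsq_diff kin_comm)

lemma coord_le: "i < 2^m \<Longrightarrow> (x i)\<^sup>2 \<le> nsq m x"
  unfolding nsq_def by (rule member_le_sum) auto



lemma nsq_sc: "nsq m (sc r) = r\<^sup>2"
proof -
  have "nsq m (sc r) = (\<Sum>i<(2::nat)^m. if i = 0 then r\<^sup>2 else 0)"
    unfolding nsq_def sc_def by (rule sum.cong) auto
  also have "\<dots> = r\<^sup>2" by (simp add: sum.delta)
  finally show ?thesis .
qed

lemma knorm_sc: "knorm m (sc r) = \<bar>r\<bar>"
  by (simp add: knorm_nsq nsq_sc)

locale cfz =
  fixes m :: nat and Z :: "(nat \<Rightarrow> real) set"
  assumes sub: "is_subring m Z" and disc: "is_discrete m Z" and cc: "\<forall>z\<in>Z. kconj m z \<in> Z"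
begin

lemma Z_kset: "z \<in> Z \<Longrightarrow> z \<in> kset m" using sub unfolding is_subring_def by blast
lemma Z0: "0 \<in> Z" using sub unfolding is_subring_def by blast
lemma Z1: "sc 1 \<in> Z" using sub unfolding is_subring_def kone_sc by blast
lemma Zadd: "x \<in> Z \<Longrightarrow> y \<in> Z \<Longrightarrow> x + y \<in> Z" using sub unfolding is_subring_def by blast
lemma Zdiff: "x \<in> Z \<Longrightarrow> y \<in> Z \<Longrightarrow> x - y \<in> Z" using sub unfolding is_subring_def by blast
lemma Zmult: "x \<in> Z \<Longrightarrow> y \<in> Z \<Longrightarrow> kmult m x y \<in> Z" using sub unfolding is_subring_def by blast
lemma Zconj: "x \<in> Z \<Longrightarrow> kconj m x \<in> Z" using cc by blast

lemma Znat: "z \<in> Z \<Longrightarrow> (\<lambda>i. real k * z i) \<in> Z"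
proof (induction k)
  case 0
  then show ?case using Z0 by (simp add: zero_fun_def)
next
  case (Suc k)
  have "(\<lambda>i. real (Suc k) * z i) = (\<lambda>i. real k * z i) + z" by (auto simp: algebra_simps)
  then show ?case using Suc Zadd by simp
qed

lemma Zint: assumes "z \<in> Z" "r \<in> \<int>" shows "(\<lambda>i. r * z i) \<in> Z"
proof -
  obtain n where n: "r = of_int n" using assms(2) Ints_cases by blast
  show ?thesis
  proof (cases "n \<ge> 0")
    case True
    then have "r = real (nat n)" using n by simp
    then show ?thesis using Znat assms(1) by simp
  next
    case False
    then have r: "r = - real (nat (- n))" using n by simp
    have "(\<lambda>i. r * z i) = 0 - (\<lambda>i. real (nat (- n)) * z i)" by (auto simp: r)
    moreover have "0 - (\<lambda>i. real (nat (- n)) * z i) \<in> Z" using Zdiff Z0 Znat assms(1) by blast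
    ultimately show ?thesis by simp
  qed
qed

lemma sc_Z: "r \<in> \<int> \<Longrightarrow> sc r \<in> Z"
proof -
  assume r: "r \<in> \<int>"
  have "sc r = (\<lambda>i. r * sc 1 i)" by (auto simp: sc_def)
  then show ?thesis using Zint[OF Z1 r] by simp
qed

lemma disc0: "\<exists>e>0. \<forall>w\<in>Z. w \<noteq> 0 \<longrightarrow> e \<le> knorm m w"
  using disc Z0 unfolding is_discrete_def by fastforce

lemma sc_int: assumes "sc r \<in> Z" shows "r \<in> \<int>"
proof (rule ccontr)
  assume nr: "r \<notin> \<int>"
  define t where "t = r - of_int \<lfloor>r\<rfloor>"
  have t0: "0 \<le> t" "t < 1" unfolding t_def by linarith+
  have "t \<noteq> 0" using nr unfolding t_def by (metis Ints_of_int eq_iff_diff_eq_0)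
  with t0 have tpos: "0 < t" by simp
  have st: "sc t \<in> Z" unfolding t_def using Zdiff[OF assms sc_Z[of "of_int \<lfloor>r\<rfloor>"]] by (simp add: sc_diff)
  have pw: "sc (t ^ j) \<in> Z" for j
  proof (induction j)
    case 0 then show ?case using Z1 by simp
  next
    case (Suc j)
    have "sc (t ^ Suc j) = kmult m (sc t) (sc (t ^ j))" by (simp add: kmult_sc)
    then show ?case using Zmult[OF st Suc] by simp
  qed
  obtain e where e: "e > 0" "\<forall>w\<in>Z. w \<noteq> 0 \<longrightarrow> e \<le> knorm m w" using disc0 by blast
  have "(\<lambda>j. t ^ j) \<longlonglongrightarrow> 0" using t0 tpos by (intro LIMSEQ_power_zero) simp
  then have "eventually (\<lambda>j. t ^ j < e) sequentially" using e(1) by (rule order_tendstoD(2))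
  then obtain j where "t ^ j < e" unfolding eventually_sequentially by blast
  moreover have "sc (t ^ j) \<noteq> 0" using tpos by (auto simp: sc_def fun_eq_iff)
  ultimately show False using e(2) pw[of j] knorm_sc[of m "t ^ j"] tpos by auto
qed

lemma nsq_Z_int: "z \<in> Z \<Longrightarrow> nsq m z \<in> \<int>"
proof -
  assume z: "z \<in> Z"
  have "kmult m z (kconj m z) \<in> Z" using Zmult[OF z Zconj[OF z]] .
  then have "sc (nsq m z) \<in> Z" using norm_ident[of m z] by simp
  then show ?thesis by (rule sc_int)
qed

lemma int_ge1: "(r::real) \<in> \<int> \<Longrightarrow> 0 < r \<Longrightarrow> 1 \<le> r"
proof -
  assume "r \<in> \<int>" "0 < r"
  then obtain n where "r = of_int n" "0 < n" by (metis Ints_cases of_int_0_less_iff)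
  then show ?thesis by simp
qed

lemma nsq_Z_pos: "z \<in> Z \<Longrightarrow> z \<noteq> 0 \<Longrightarrow> 1 \<le> nsq m z"
proof -
  assume "z \<in> Z" "z \<noteq> 0"
  then have "nsq m z \<in> \<int>" "nsq m z \<noteq> 0" using nsq_Z_int nsq_zero_iff Z_kset by blast+
  moreover have "0 \<le> nsq m z" by (rule nsq_nonneg)
  ultimately show ?thesis using int_ge1 by force
qed

end


context cfz begin

lemma disc_pair: "\<exists>e>0. \<forall>u\<in>Z. \<forall>w\<in>Z. u \<noteq> w \<longrightarrow> e\<^sup>2 \<le> nsq m (u - w)"
proof -
  obtain e where e: "e > 0" "\<forall>w\<in>Z. w \<noteq> 0 \<longrightarrow> e \<le> knorm m w" using disc0 by blast
  have "e\<^sup>2 \<le> nsq m (u - w)" if "u \<in> Z" "w \<in> Z" "u \<noteq> w" for u w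
  proof -
    have "e \<le> knorm m (u - w)" using e that Zdiff by auto
    then have "e\<^sup>2 \<le> (knorm m (u - w))\<^sup>2" using e(1) by (intro power_mono) auto
    then show ?thesis by (simp add: knorm_sq)
  qed
  then show ?thesis using e(1) by blast
qed

lemma finite_ball: "finite {u\<in>Z. nsq m u \<le> R}"
proof -
  obtain e where e: "e > 0" "\<forall>u\<in>Z. \<forall>w\<in>Z. u \<noteq> w \<longrightarrow> e\<^sup>2 \<le> nsq m (u - w)" using disc_pair by blast
  define d :: nat where "d = 2^m"
  have d1: "1 \<le> d" unfolding d_def by simp
  define s where "s = e / (2 * real d)"
  have s0: "s > 0" unfolding s_def using e(1) d1 by simp
  define S where "S = {u\<in>Z. nsq m u \<le> R}"
  define cell where "cell u = map (\<lambda>i. \<lfloor>u i / s\<rfloor>) [0..<d]" for u :: "nat \<Rightarrow> real"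
  define K :: int where "K = \<lceil>sqrt \<bar>R\<bar> / s\<rceil> + 1"
  have inj: "inj_on cell S"
  proof (rule inj_onI)
    fix u w assume u: "u \<in> S" and w: "w \<in> S" and cw: "cell u = cell w"
    show "u = w"
    proof (rule ccontr)
      assume ne: "u \<noteq> w"
      have fl: "\<lfloor>u i / s\<rfloor> = \<lfloor>w i / s\<rfloor>" if "i < d" for i
        using cw that unfolding cell_def by (simp add: map_eq_conv)
      have cl: "(u i - w i)\<^sup>2 \<le> s\<^sup>2" if "i < d" for i
      proof -
        have "\<bar>u i / s - w i / s\<bar> < 1" using fl[OF that] by linarith
        then have "\<bar>u i - w i\<bar> < s" using s0 by (simp add: diff_divide_distrib[symmetric] abs_divide)
        then show ?thesis using s0 by (metis abs_ge_zero less_imp_le power2_abs power_mono)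
      qed
      have "nsq m (u - w) = (\<Sum>i<d. (u i - w i)\<^sup>2)" unfolding nsq_def d_def by simp
      also have "\<dots> \<le> (\<Sum>i<d. s\<^sup>2)" by (rule sum_mono) (use cl in auto)
      also have "\<dots> = real d * s\<^sup>2" by simp
      finally have le: "nsq m (u - w) \<le> real d * s\<^sup>2" .
      have "e\<^sup>2 \<le> nsq m (u - w)" using e(2) u w ne unfolding S_def by blast
      moreover have "real d * s\<^sup>2 < e\<^sup>2"
      proof -
        have "real d * s\<^sup>2 = e\<^sup>2 / (4 * real d)" unfolding s_def using d1 by (simp add: power2_eq_square field_simps)
        also have "\<dots> < e\<^sup>2" using d1 e(1) by (simp add: field_simps)
        finally show ?thesis .
      qed
      ultimately show False using le by linarith
    qed
  qed
  have img: "cell ` S \<subseteq> {xs. set xs \<subseteq> {-K..K} \<and> length xs = d}"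
  proof
    fix xs assume "xs \<in> cell ` S"
    then obtain u where u: "u \<in> S" and xs: "xs = cell u" by blast
    have "\<lfloor>u i / s\<rfloor> \<in> {-K..K}" if "i < d" for i
    proof -
      have "(u i)\<^sup>2 \<le> nsq m u" using coord_le that unfolding d_def by blast
      also have "\<dots> \<le> \<bar>R\<bar>" using u unfolding S_def by auto
      finally have "\<bar>u i\<bar> \<le> sqrt \<bar>R\<bar>" using real_le_rsqrt by (metis real_sqrt_abs real_sqrt_le_mono)
      then have "\<bar>u i / s\<bar> \<le> sqrt \<bar>R\<bar> / s" using s0 by (simp add: abs_divide divide_right_mono)
      moreover have "sqrt \<bar>R\<bar> / s \<le> of_int \<lceil>sqrt \<bar>R\<bar> / s\<rceil>" by (rule le_of_int_ceiling)
      ultimately show ?thesis unfolding K_def by (simp, linarith)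
    qed
    then show "xs \<in> {xs. set xs \<subseteq> {-K..K} \<and> length xs = d}" unfolding xs cell_def by auto
  qed
  have "finite (cell ` S)" by (rule finite_subset[OF img]) (rule finite_lists_length_eq, simp)
  then show ?thesis using inj finite_imageD unfolding S_def by blast
qed

end


fun tc :: "nat \<Rightarrow> (nat \<Rightarrow> nat \<Rightarrow> real) \<Rightarrow> nat \<Rightarrow> nat \<Rightarrow> (nat \<Rightarrow> real) \<Rightarrow> (nat \<Rightarrow> real)" where
  "tc m a lo 0 y = y"
| "tc m a lo (Suc i) y = tc m a lo i (Tinv m (a (lo + Suc i)) y)"

lemma tinv_tc: "tinv_comp m a i y = tc m a 0 i y"
  by (induction i arbitrary: y) auto

lemma tc_Suc: "tc m a lo (Suc i) y = Tinv m (a (Suc lo)) (tc m a (Suc lo) i y)"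
proof (induction i arbitrary: y)
  case 0
  then show ?case by simp
next
  case (Suc i)
  have "tc m a lo (Suc (Suc i)) y = tc m a lo (Suc i) (Tinv m (a (lo + Suc (Suc i))) y)" by simp
  also have "\<dots> = Tinv m (a (Suc lo)) (tc m a (Suc lo) i (Tinv m (a (lo + Suc (Suc i))) y))" by (rule Suc.IH)
  also have "\<dots> = Tinv m (a (Suc lo)) (tc m a (Suc lo) (Suc i) y)" by simp
  finally show ?case .
qed

lemma kset_diff: "x \<in> kset m \<Longrightarrow> y \<in> kset m \<Longrightarrow> x - y \<in> kset m" by (auto simp: kset_def)
lemma kset_add: "x \<in> kset m \<Longrightarrow> y \<in> kset m \<Longrightarrow> x + y \<in> kset m" by (auto simp: kset_def)
lemma kset_scale: "x \<in> kset m \<Longrightarrow> (\<lambda>i. c * x i) \<in> kset m" by (auto simp: kset_def)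

locale cfm = cfz +
  fixes a :: "nat \<Rightarrow> nat \<Rightarrow> real" and x0 :: "nat \<Rightarrow> real"
  assumes aZ: "\<forall>n\<ge>1. a n \<in> Z" and x0k: "x0 \<in> kset m"
    and nz: "\<forall>n. orbit m a x0 n \<noteq> 0" and lt1: "\<forall>n. knorm m (orbit m a x0 n) < 1"
begin

abbreviation X where "X k \<equiv> orbit m a x0 k"

lemma X_kset: "X k \<in> kset m"
proof (induction k)
  case 0 then show ?case using x0k by simp
next
  case (Suc k)
  have "a (Suc k) \<in> kset m" using aZ Z_kset by simp
  then show ?case unfolding orbit.simps Tmap_def by (rule kset_diff[OF kinv_kset])
qed

lemma X_nsq: "nsq m (X k) \<noteq> 0" using nz X_kset nsq_zero_iff by blast

lemma X_pos: "0 < knorm m (X k)"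
proof -
  have "0 < nsq m (X k)" using X_nsq[of k] nsq_nonneg[of m "X k"] by linarith
  then show ?thesis by (simp add: knorm_nsq)
qed

lemma X_rec: "X (Suc k) + a (Suc k) = kinv m (X k)" by (simp add: Tmap_def)

lemma X_back: "X k = kinv m (X (Suc k) + a (Suc k))"
  using X_rec kinv_kinv X_kset nz by metis

lemma prod_le: "j \<le> n \<Longrightarrow> (\<Prod>k\<in>{j..n}. knorm m (X k)) \<le> knorm m (X j)"
proof -
  assume "j \<le> n"
  then have "(\<Prod>k\<in>{j..n}. knorm m (X k)) = knorm m (X j) * (\<Prod>k\<in>{Suc j..n}. knorm m (X k))"
    by (rule prod.atLeast_Suc_atMost)
  moreover have "(\<Prod>k\<in>{Suc j..n}. knorm m (X k)) \<le> 1"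
    using lt1 X_pos by (intro prod_le_1) (auto simp: less_imp_le)
  ultimately show ?thesis using X_pos[of j] by (simp add: mult_left_le)
qed

lemma prod_nonneg': "0 \<le> (\<Prod>k\<in>A. knorm m (X k))"
  using X_pos by (simp add: prod_nonneg less_imp_le)

lemma chain:
  assumes "i \<le> n"
  shows "\<exists>N u M. u \<in> Z \<and> N \<in> \<int> \<and> 1 \<le> N \<and> M \<in> \<int> \<and> nsq m u = N * M \<and>
     tc m a (n - i) i 0 = (\<lambda>k. u k / N) \<and>
     knorm m (X (n - i) - tc m a (n - i) i 0) = (\<Prod>k\<in>{n - i..n}. knorm m (X k)) / sqrt N"
  using assms
proof (induction i)
  case 0
  have h1: "tc m a n 0 0 = (\<lambda>k. 0 k / 1)" by (simp add: zero_fun_def)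
  have h2: "knorm m (X n - tc m a n 0 0) = (\<Prod>k\<in>{n..n}. knorm m (X k)) / sqrt 1" by simp
  show ?case
    apply (rule exI[of _ "1::real"])
    apply (rule exI[of _ "0::nat\<Rightarrow>real"])
    apply (rule exI[of _ "0::real"])
    using Z0 h1 h2 by (simp add: nsq_def)
next
  case (Suc i)
  define j where "j = n - i"
  have j1: "1 \<le> j" and jn: "j \<le> n" using Suc.prems unfolding j_def by auto
  have jj: "n - Suc i = j - 1" "Suc (j - 1) = j" unfolding j_def using Suc.prems by auto
  obtain N u M where u: "u \<in> Z" and N: "N \<in> \<int>" "1 \<le> N" and M: "M \<in> \<int>" and uM: "nsq m u = N * M"
    and zu: "tc m a j i 0 = (\<lambda>k. u k / N)"
    and dist: "knorm m (X j - tc m a j i 0) = (\<Prod>k\<in>{j..n}. knorm m (X k)) / sqrt N"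
  proof -
    have "i \<le> n" using Suc.prems by simp
    from Suc.IH[OF this] show ?thesis using that unfolding j_def[symmetric] by blast
  qed
  define z where "z = tc m a j i 0"
  define A where "A = a j"
  define P where "P = (\<Prod>k\<in>{j..n}. knorm m (X k))"
  have AZ: "A \<in> Z" using aZ j1 unfolding A_def by auto
  have Ak: "A \<in> kset m" using AZ Z_kset by blast
  have uk: "u \<in> kset m" using u Z_kset by blast
  have P0: "0 \<le> P" unfolding P_def by (rule prod_nonneg')
  have tcj: "tc m a (n - Suc i) (Suc i) 0 = kinv m (z + A)"
    unfolding jj z_def A_def tc_Suc jj(2) Tinv_def ..
  have Xj1: "X (j - 1) = kinv m (X j + A)"
    using X_back[of "j - 1"] jj(2) unfolding A_def by simp
  have Xj1': "X j + A = kinv m (X (j - 1))"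
    using X_rec[of "j - 1"] jj(2) unfolding A_def by simp
  define v where "v = u + (\<lambda>k. N * A k)"
  have vZ: "v \<in> Z" unfolding v_def using Zadd[OF u Zint[OF AZ N(1)]] .
  have vk: "v \<in> kset m" using vZ Z_kset by blast
  have zA: "z + A = (\<lambda>k. (1 / N) * v k)"
    using N(2) unfolding z_def zu v_def by (auto simp: field_simps)
  have nzA: "z + A \<noteq> 0"
  proof
    assume h: "z + A = 0"
    have "X j - z = X j + A"
    proof (rule ext)
      fix k show "(X j - z) k = (X j + A) k" using fun_cong[OF h, of k] by simp
    qed
    then have "knorm m (X j - z) = knorm m (kinv m (X (j - 1)))" using Xj1' by simp
    also have "\<dots> = 1 / knorm m (X (j - 1))"
      using X_nsq nsq_nonneg by (simp add: knorm_nsq nsq_kinv real_sqrt_divide)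
    also have "\<dots> > 1" using X_pos lt1 by simp
    finally have g: "knorm m (X j - z) > 1" .
    have "knorm m (X j - z) = P / sqrt N" using dist unfolding z_def P_def .
    also have "\<dots> \<le> P" using N(2) P0 by (simp add: divide_le_eq real_le_rsqrt mult_le_cancel_left1)
    also have "\<dots> \<le> knorm m (X j)" unfolding P_def using prod_le jn by blast
    also have "\<dots> < 1" using lt1 by simp
    finally show False using g by simp
  qed
  have v0: "v \<noteq> 0" using nzA zA by auto
  have nv: "nsq m v = N * M + 2 * N * kin m u A + N\<^sup>2 * nsq m A"
  proof -
    have "v = (\<lambda>k. 1 * u k + N * A k)" unfolding v_def by auto
    then have "nsq m v = 1\<^sup>2 * nsq m u + 2 * 1 * N * kin m u A + N\<^sup>2 * nsq m A" using nsq_lin by metis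
    then show ?thesis using uM by simp
  qed
  define N' where "N' = nsq m v / N"
  have N'eq: "N' = M + 2 * kin m u A + N * nsq m A"
    unfolding N'_def nv using N(2) by (simp add: field_simps power2_eq_square)
  have kin_int: "2 * kin m u A \<in> \<int>"
  proof -
    have "2 * kin m u A = nsq m (u + A) - nsq m u - nsq m A" by (simp add: nsq_add)
    then show ?thesis using nsq_Z_int Zadd u AZ by (metis Ints_diff)
  qed
  have N'int: "N' \<in> \<int>" unfolding N'eq by (rule Ints_add[OF Ints_add[OF M kin_int] Ints_mult[OF N(1) nsq_Z_int[OF AZ]]])
  have nvpos: "0 < nsq m v" using v0 vk nsq_zero_iff nsq_nonneg by (metis less_eq_real_def)
  have N'pos: "0 < N'" unfolding N'_def using nvpos N(2) by simp
  have N'1: "1 \<le> N'" using N'int N'pos by (rule int_ge1)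
  define u' where "u' = kconj m v"
  have u'Z: "u' \<in> Z" unfolding u'_def using Zconj vZ .
  have nu': "nsq m u' = N' * N" unfolding u'_def N'_def using nsq_conj N(2) by simp
  have nzA2: "nsq m (z + A) = N' / N"
  proof -
    have "nsq m (z + A) = (1/N)\<^sup>2 * nsq m v" unfolding zA by (rule nsq_scale)
    then show ?thesis unfolding N'_def using N(2) by (simp add: power2_eq_square field_simps)
  qed
  have newz: "kinv m (z + A) = (\<lambda>k. u' k / N')"
  proof (rule ext)
    fix k
    have e1: "kinv m (z + A) k = kconj m (z + A) k / nsq m (z + A)" unfolding kinv_eq ..
    have e2: "kconj m (z + A) k = (1 / N) * kconj m v k" by (simp only: zA conj_scale)
    show "kinv m (z + A) k = u' k / N'"
      unfolding e1 e2 nzA2 u'_def using N(2) N'pos by (simp add: field_simps)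
  qed
  have zk: "z \<in> kset m" unfolding z_def zu using uk by (auto simp: kset_def)
  have newd: "knorm m (X (j - 1) - kinv m (z + A)) = (\<Prod>k\<in>{j - 1..n}. knorm m (X k)) / sqrt N'"
  proof -
    have nx: "nsq m (X j + A) = 1 / nsq m (X (j - 1))" unfolding Xj1' by (rule nsq_kinv)
    have nx0: "nsq m (X j + A) \<noteq> 0" using nx X_nsq by simp
    have ny0: "nsq m (z + A) \<noteq> 0" using nzA2 N'pos N(2) by simp
    define D where "D = nsq m (X (j - 1) - kinv m (z + A))"
    have "D = nsq m ((X j + A) - (z + A)) / (nsq m (X j + A) * nsq m (z + A))"
      unfolding D_def Xj1 by (rule nsq_kinv_diff[OF nx0 ny0])
    moreover have "(X j + A) - (z + A) = X j - z" by (rule ext) simp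
    moreover have "nsq m (X j - z) = P\<^sup>2 / N"
      using dist N(2) unfolding z_def P_def knorm_sq[symmetric] by (simp add: power_divide)
    ultimately have "D = (P\<^sup>2 / N) / ((1 / nsq m (X (j - 1))) * (N' / N))"
      unfolding nx nzA2 by simp
    then have "D = P\<^sup>2 * nsq m (X (j - 1)) / N'"
      using N(2) N'pos X_nsq[of "j-1"] by (simp add: field_simps)
    then have "nsq m (X (j - 1) - kinv m (z + A)) = P\<^sup>2 * nsq m (X (j - 1)) / N'"
      unfolding D_def .
    then have "knorm m (X (j - 1) - kinv m (z + A)) = sqrt (P\<^sup>2 * nsq m (X (j - 1)) / N')"
      by (simp only: knorm_nsq)
    also have "\<dots> = P * sqrt (nsq m (X (j - 1))) / sqrt N'"
      using P0 by (simp add: real_sqrt_mult real_sqrt_divide)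
    also have "\<dots> = P * knorm m (X (j - 1)) / sqrt N'" by (simp only: knorm_nsq)
    finally have k1: "knorm m (X (j - 1) - kinv m (z + A)) = P * knorm m (X (j - 1)) / sqrt N'" .
    have "j - 1 \<le> n" using jn by simp
    then have pe: "(\<Prod>k\<in>{j - 1..n}. knorm m (X k)) = knorm m (X (j - 1)) * (\<Prod>k\<in>{Suc (j - 1)..n}. knorm m (X k))"
      by (rule prod.atLeast_Suc_atMost)
    have "(\<Prod>k\<in>{j - 1..n}. knorm m (X k)) = knorm m (X (j - 1)) * P"
      unfolding pe jj(2) P_def ..
    then show ?thesis unfolding k1 by (simp only: mult.commute)
  qed
  have fin: "u' \<in> Z \<and> N' \<in> \<int> \<and> 1 \<le> N' \<and> N \<in> \<int> \<and> nsq m u' = N' * N \<and>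
     tc m a (j - 1) (Suc i) 0 = (\<lambda>k. u' k / N') \<and>
     knorm m (X (j - 1) - tc m a (j - 1) (Suc i) 0) = (\<Prod>k\<in>{j - 1..n}. knorm m (X k)) / sqrt N'"
    using u'Z N'int N'1 N(1) nu' newz newd tcj unfolding jj(1) by simp
  show ?case unfolding jj(1) using fin by blast
qed

end


lemma nsq_add_le: "nsq m (x + y) \<le> 2 * nsq m x + 2 * nsq m y"
proof -
  have "0 \<le> nsq m (x - y)" by (rule nsq_nonneg)
  then show ?thesis unfolding nsq_add nsq_diff by linarith
qed

context cfm begin

abbreviation E where "E n \<equiv> (\<Prod>k\<in>{0..n}. knorm m (X k))"

lemma E_pos: "0 < E n" using X_pos by (simp add: prod_pos)

lemma E_le1: "E n \<le> 1" using lt1 X_pos by (intro prod_le_1) (auto simp: less_imp_le)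

lemma E_Suc: "E (Suc n) < E n"
proof -
  have "E (Suc n) = E n * knorm m (X (Suc n))" by (simp add: prod.atLeast0_atMost_Suc)
  also have "\<dots> < E n"
  proof -
    have "knorm m (X (Suc n)) < 1" using lt1 by blast
    then show ?thesis using E_pos[of n] by (simp add: mult_less_cancel_left1 del: orbit.simps)
  qed
  finally show ?thesis .
qed

lemma E_strict: "n < n' \<Longrightarrow> E n' < E n"
proof -
  assume "n < n'"
  have "(\<lambda>k. - E k) n < (\<lambda>k. - E k) n'"
    by (rule lift_Suc_mono_less[of "\<lambda>k. - E k"]) (use E_Suc \<open>n < n'\<close> in auto)
  then show ?thesis by simp
qed

lemma conv: "(\<lambda>n. knorm m (tinv_comp m a n 0 - x0)) \<longlonglongrightarrow> 0"
proof -
  define c where "c n = tinv_comp m a n 0" for n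
  define e where "e n = knorm m (c n - x0)" for n
  have "\<exists>p. fst p \<in> \<int> \<and> 1 \<le> fst p \<and> snd p \<in> Z \<and> c n = (\<lambda>k. snd p k / fst p) \<and>
      e n = E n / sqrt (fst p)" for n
  proof -
    obtain N u M where u: "u \<in> Z" and N: "N \<in> \<int>" "1 \<le> N"
      and zu: "tc m a (n - n) n 0 = (\<lambda>k. u k / N)"
      and dist: "knorm m (X (n - n) - tc m a (n - n) n 0) = (\<Prod>k\<in>{n - n..n}. knorm m (X k)) / sqrt N"
      using chain[of n n] by blast
    have cn: "c n = tc m a 0 n 0" unfolding c_def tinv_tc ..
    have "e n = knorm m (x0 - c n)" unfolding e_def knorm_nsq using nsq_sym by metis
    then have "e n = E n / sqrt N" using dist unfolding cn by simp
    moreover have "c n = (\<lambda>k. u k / N)" using zu unfolding cn by simp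
    ultimately show ?thesis using u N by (intro exI[of _ "(N, u)"]) simp
  qed
  then obtain F where F: "\<And>n. fst (F n) \<in> \<int> \<and> 1 \<le> fst (F n) \<and> snd (F n) \<in> Z \<and>
      c n = (\<lambda>k. snd (F n) k / fst (F n)) \<and> e n = E n / sqrt (fst (F n))"
    using choice[of "\<lambda>n p. fst p \<in> \<int> \<and> 1 \<le> fst p \<and> snd p \<in> Z \<and> c n = (\<lambda>k. snd p k / fst p) \<and>
      e n = E n / sqrt (fst p)"] by blast
  have e0: "0 \<le> e n" for n unfolding e_def knorm_nsq by (simp add: nsq_nonneg)
  show ?thesis
  proof (rule LIMSEQ_I)
    fix r :: real assume r: "0 < r"
    define I where "I = {n. r \<le> e n}"
    have "finite I"
    proof (rule ccontr)
      assume inf: "infinite I"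
      define T1 where "T1 = {N :: real. N \<in> \<int> \<and> 1 \<le> N \<and> N \<le> 1 / r\<^sup>2}"
      define T2 where "T2 = {u \<in> Z. nsq m u \<le> 4 / r\<^sup>2 / r\<^sup>2}"
      have fT1: "finite T1"
      proof -
        have "T1 \<subseteq> of_int ` {0..\<lceil>1 / r\<^sup>2\<rceil>}"
        proof
          fix N assume "N \<in> T1"
          then have N: "N \<in> \<int>" "1 \<le> N" "N \<le> 1 / r\<^sup>2" unfolding T1_def by auto
          obtain k where k: "N = of_int k" using N(1) Ints_cases by blast
          have "k \<in> {0..\<lceil>1 / r\<^sup>2\<rceil>}" using N k by (auto simp: le_ceiling_iff)
          then show "N \<in> of_int ` {0..\<lceil>1 / r\<^sup>2\<rceil>}" using k by blast
        qed
        then show ?thesis by (rule finite_subset) simp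
      qed
      have fT2: "finite T2" unfolding T2_def by (rule finite_ball)
      have sub: "F ` I \<subseteq> T1 \<times> T2"
      proof
        fix p assume "p \<in> F ` I"
        then obtain n where n: "n \<in> I" and p: "p = F n" by blast
        define N where "N = fst (F n)"
        define u where "u = snd (F n)"
        have N: "N \<in> \<int>" "1 \<le> N" and uZ: "u \<in> Z" and cu: "c n = (\<lambda>k. u k / N)"
          and en: "e n = E n / sqrt N" using F[of n] unfolding N_def u_def by auto
        have rle: "r \<le> E n / sqrt N" using n en unfolding I_def by simp
        have sN: "0 < sqrt N" using N by simp
        have "r * sqrt N \<le> E n" using rle sN by (simp add: le_divide_eq)
        also have "\<dots> \<le> 1" by (rule E_le1)
        finally have "r * sqrt N \<le> 1" .
        then have "(r * sqrt N)\<^sup>2 \<le> 1" using r sN by (metis mult_pos_pos less_imp_le one_power2 power_mono)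
        then have "r\<^sup>2 * N \<le> 1" using N by (simp add: power_mult_distrib)
        then have N1: "N \<le> 1 / r\<^sup>2" using r by (simp add: le_divide_eq mult.commute)
        have "e n \<le> E n" unfolding en using E_pos[of n] N by (simp add: divide_le_eq real_le_rsqrt mult_le_cancel_left1)
        then have "e n \<le> 1" using E_le1[of n] by simp
        then have ne: "nsq m (c n - x0) \<le> 1" using e0[of n] unfolding e_def knorm_nsq
          by (metis nsq_nonneg real_sqrt_le_1_iff)
        have nx: "nsq m x0 \<le> 1" using lt1 spec[OF lt1, of 0] nsq_nonneg[of m x0]
          by (simp add: knorm_nsq)
        have "x0 + (c n - x0) = c n" by (rule ext) simp
        then have nc: "nsq m (c n) \<le> 4" using nsq_add_le[of m x0 "c n - x0"] ne nx by simp
        have ueq: "u = (\<lambda>k. N * c n k)" unfolding cu using N by (auto simp: fun_eq_iff)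
        have "nsq m u = N\<^sup>2 * nsq m (c n)" unfolding ueq by (rule nsq_scale)
        also have "\<dots> \<le> (1 / r\<^sup>2)\<^sup>2 * 4"
          using nc N N1 nsq_nonneg[of m "c n"] by (intro mult_mono power_mono) auto
        also have "\<dots> = 4 / r\<^sup>2 / r\<^sup>2" by (simp add: power2_eq_square field_simps)
        finally have "nsq m u \<le> 4 / r\<^sup>2 / r\<^sup>2" .
        then show "p \<in> T1 \<times> T2" unfolding p T1_def T2_def using N N1 uZ
          by (simp add: mem_Times_iff N_def[symmetric] u_def[symmetric])
      qed
      have "finite (F ` I)" using sub fT1 fT2 by (meson finite_SigmaI finite_subset)
      then have "\<not> inj_on F I" using inf finite_imageD by blast
      then obtain n n' where nn: "n \<in> I" "n' \<in> I" "n \<noteq> n'" "F n = F n'"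
        unfolding inj_on_def by blast
      have "c n = c n'" using F[of n] F[of n'] nn(4) by simp
      then have "e n = e n'" unfolding e_def by simp
      then have "E n / sqrt (fst (F n)) = E n' / sqrt (fst (F n))" using F[of n] F[of n'] nn(4) by simp
      moreover have "0 < sqrt (fst (F n))" using F[of n] by simp
      ultimately have "E n = E n'" by simp
      moreover have "E n \<noteq> E n'" using nn(3) E_strict by (metis linorder_neqE_nat less_irrefl)
      ultimately show False by simp
    qed
    then obtain B where B: "I \<subseteq> {..<B}" by (auto simp: finite_nat_set_iff_bounded)
    have "\<forall>n\<ge>B. norm (e n - 0) < r"
    proof (intro allI impI)
      fix n assume "B \<le> n"
      then have "n \<notin> I" using B by auto
      then show "norm (e n - 0) < r" using e0[of n] unfolding I_def by simp
    qed
    then show "\<exists>no. \<forall>n\<ge>no. norm (knorm m (tinv_comp m a n 0 - x0) - 0) < r"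
      unfolding e_def c_def by blast
  qed
qed

end

theorem theorem1p2:
  fixes m :: nat and Z :: "(nat \<Rightarrow> real) set"
    and a :: "nat \<Rightarrow> nat \<Rightarrow> real" and x0 :: "nat \<Rightarrow> real"
  assumes "m \<le> 3"
    and "is_subring m Z" and "is_discrete m Z"
    and "\<forall>z\<in>Z. kconj m z \<in> Z"
    and "\<forall>n\<ge>1. a n \<in> Z"
    and "x0 \<in> kset m"
    and "\<forall>n. orbit m a x0 n \<noteq> 0"
    and "\<forall>n. knorm m (orbit m a x0 n) < 1"
  shows "(\<lambda>n. knorm m (tinv_comp m a n 0 - x0)) \<longlonglongrightarrow> 0"
proof -
  interpret cfm m Z a x0 by unfold_locales (use assms in auto)
  show ?thesis by (rule conv)
qed


end
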